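(* Let $x,y\in X$ with $\deg(x)=\deg(y)=i$ for some positive integer $i$, and assume there are integers $n>i+2$ and $k\geq1$ such that $T^j(x)_n=T^j(y)_n$ for all $j\geq k$ and the infinite path $\big(T^j(x)_n\big)_{j\geq k}$ in $G_n$ begins with the cycle $c_{n,i}$ (that is, $\big(T^{k+t}(x)_n\big)_{t=0}^{|c_{n,i}|}$ is exactly the cycle $c_{n,i}$). Then $T^j(x)_n=T^j(y)_n$ for all $j\geq0$.
   Context: Paths and cycles: a graph is $G=(V,E)$ with $V$ finite and $E\subset V\times V$. A path is a finite sequence of vertices $(u_0,\dots,u_L)$ with $(u_j,u_{j+1})\in E$; its length is $|\cdot|=L$; a cycle is a path with $u_0=u_L$. For paths where one ends where the next starts, $+$ denotes concatenation and $a\,c$ means the cycle $c$ traversed $a$ times. Construction: $G_0=(V_0,E_0)$ with $V_0=\{v_{0,0}\}$, $E_0=\{e_{0,0}\}$, $e_{0,0}=(v_{0,0},v_{0,0})$. For $n\geq1$, $G_n=(V_n,E_n)$ consists of a vertex $v_{n,0}$, the loop $e_{n,0}=(v_{n,0},v_{n,0})$, and $n$ cycles $c_{n,1},\dots,c_{n,n}$, each starting and ending at $v_{n,0}$, whose vertices other than $v_{n,0}$ are pairwise distinct (within each cycle and across cycles); $V_n$ is the set of all these vertices and $E_n$ consists of $e_{n,0}$ and the edges of the cycles. The maps $\varphi_n\colon V_{n+1}\to V_n$ and the lengths of the cycles $c_{n+1,i}$ are defined together: $\varphi_n(v_{n+1,0})=v_{n,0}$, and for each $i$ a path $P_{n,i}$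 in $G_n$ from $v_{n,0}$ to $v_{n,0}$ is given; $c_{n+1,i}$ has length $|P_{n,i}|$ and $\varphi_n$ maps its $j$-th vertex to the $j$-th vertex of $P_{n,i}$ (written $\varphi_n(c_{n+1,i})=P_{n,i}$). The paths are: $P_{0,1}=10\,e_{0,0}$; for $n\geq1$: $P_{n,i}=e_{n,0}+2c_{n,i}+2c_{n,i+1}+\dots+2c_{n,n}+e_{n,0}$ for $2\leq i\leq n$; $P_{n,n+1}=(n+2)^2\big(\sum_{i=1}^n|c_{n,i}|\big)\,e_{n,0}$; and $P_{n,1}=(1\,e_{n,0}+2c_{n,1})+(2\,e_{n,0}+2c_{n,1})+\dots+(k_n\,e_{n,0}+2c_{n,1})+e_{n,0}+2c_{n,2}+\dots+2c_{n,n}+e_{n,0}$, where $k_n=2\big(1+\sum_{i=1}^n|c_{n,i}|\big)$. Let $X=\{x\in\prod_{n\geq0}V_n:\varphi_n(x_{n+1})=x_n\ \forall n\}$ with metric $d(x,y)=2^{-\min\{i:x_i\neq y_i\}}$ ($d(x,x)=0$); $X$ is a compact zero-dimensional metric space, and $T\colon X\to X$ defined by $T(x)=y$ iff $(x_n,y_n)\in E_n$ for all $n$ is a well-defined homeomorphism. Write $x_n$ for the $n$-th coordinate of $x$; for $z\in X$ the sequence $(T^j(z)_n)_{j\geq0}$ is an infinite path in $G_n$. Degree: for $v\in V_n$, $\deg(v)=+\infty$ if $v=v_{n,0}$ and $\deg(v)=i$ if $v$ is a vertex of $c_{n,i}$ different from $v_{n,0}$; for $x\in X$, $\deg(x)=\min_n\deg(x_n)$.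 *)

theory Defs
  imports Main "HOL-Library.Extended_Nat"
begin

text \<open>Vertices of every G_n are encoded as pairs of naturals: (0,0) is the
  base vertex v_{n,0}; (i,j) with 1 \<le> i \<le> n and 1 \<le> j < |c_{n,i}| is the
  j-th vertex of the cycle c_{n,i}. Paths are vertex lists (a path of
  length L is a list of L+1 vertices).\<close>

type_synonym vert = "nat \<times> nat"

definition v0 :: vert where "v0 = (0, 0)"

definition loop :: "vert list" where "loop = [v0, v0]"

text \<open>Concatenation p + q of paths (last p = hd q).\<close>
definition pcat :: "vert list \<Rightarrow> vert list \<Rightarrow> vert list" where
  "pcat p q = p @ tl q"

fun prep :: "nat \<Rightarrow> vert list \<Rightarrow> vert list" where
  "prep 0 c = [hd c]"
| "prep (Suc a) c = pcat c (prep a c)"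

definition pcats :: "vert list list \<Rightarrow> vert list" where
  "pcats ps = foldr pcat ps [v0]"

text \<open>The cycle c_{n,i} given the length function l i = |c_{n,i}|.\<close>
definition cycl :: "(nat \<Rightarrow> nat) \<Rightarrow> nat \<Rightarrow> vert list" where
  "cycl l i = v0 # map (\<lambda>j. (i, j)) [1..<l i] @ [v0]"

text \<open>The paths P_{n,i} in G_n, given the cycle lengths l of G_n.\<close>
definition Ppath :: "nat \<Rightarrow> (nat \<Rightarrow> nat) \<Rightarrow> nat \<Rightarrow> vert list" where
  "Ppath n l i =
    (if n = 0 then prep 10 loop
     else (let S = (\<Sum>m\<in>{1..n}. l m); k = 2 * (1 + S) in
       if i = 1 then
         pcats (map (\<lambda>a. pcat (prep a loop) (prep 2 (cycl l 1))) [1..<k + 1]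
                @ [loop] @ map (\<lambda>m. prep 2 (cycl l m)) [2..<n + 1] @ [loop])
       else if i \<le> n then
         pcats ([loop] @ map (\<lambda>m. prep 2 (cycl l m)) [i..<n + 1] @ [loop])
       else prep ((n + 2)^2 * S) loop))"

text \<open>clen n i = |c_{n,i}| for 1 \<le> i \<le> n (0 otherwise).\<close>
primrec clen :: "nat \<Rightarrow> nat \<Rightarrow> nat" where
  "clen 0 = (\<lambda>i. 0)"
| "clen (Suc n) = (\<lambda>i. if 1 \<le> i \<and> i \<le> Suc n then length (Ppath n (clen n) i) - 1 else 0)"

definition cyc :: "nat \<Rightarrow> nat \<Rightarrow> vert list" where
  "cyc n i = cycl (clen n) i"

definition V :: "nat \<Rightarrow> vert set" where
  "V n = {v0} \<union> {(i, j). 1 \<le> i \<and> i \<le> n \<and> 1 \<le> j \<and> j < clen n i}"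

definition E :: "nat \<Rightarrow> (vert \<times> vert) set" where
  "E n = {(v0, v0)} \<union> (\<Union>i\<in>{1..n}. set (zip (cyc n i) (tl (cyc n i))))"

definition phi :: "nat \<Rightarrow> vert \<Rightarrow> vert" where
  "phi n v = (if v = v0 then v0 else Ppath n (clen n) (fst v) ! snd v)"

definition X :: "(nat \<Rightarrow> vert) set" where
  "X = {x. (\<forall>n. x n \<in> V n) \<and> (\<forall>n. phi n (x (Suc n)) = x n)}"

definition T :: "(nat \<Rightarrow> vert) \<Rightarrow> (nat \<Rightarrow> vert)" where
  "T x = (THE y. y \<in> X \<and> (\<forall>n. (x n, y n) \<in> E n))"

definition vdeg :: "vert \<Rightarrow> enat" where
  "vdeg v = (if v = v0 then \<infinity> else enat (fst v))"

definition deg :: "(nat \<Rightarrow> vert) \<Rightarrow> enat" where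
  "deg x = (INF n. vdeg (x n))"

end

theory Submission
  imports Defs
begin


definition cv :: "nat \<Rightarrow> nat \<Rightarrow> vert" where "cv m t = (if t = 0 then v0 else (m,t))"

fun ex :: "(nat \<Rightarrow> nat) \<Rightarrow> nat option \<Rightarrow> vert list" where
  "ex l None = [v0]"
| "ex l (Some m) = v0 # map (\<lambda>j. (m,j)) [1..<l m]"

definition pw :: "(nat \<Rightarrow> nat) \<Rightarrow> nat option list \<Rightarrow> vert list" where
  "pw l w = concat (map (ex l) w) @ [v0]"

definition wt :: "(nat \<Rightarrow> nat) \<Rightarrow> nat option list \<Rightarrow> nat" where
  "wt l w = length (concat (map (ex l) w))"

lemma ex_hd[simp]: "hd (ex l a) = v0" "ex l a \<noteq> []"
  by (cases a; simp)+

lemma pw_hd: "pw l w = v0 # tl (pw l w)"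
proof -
  have "hd (pw l w) = v0 \<and> pw l w \<noteq> []"
    by (cases w) (auto simp: pw_def)
  thus ?thesis by (metis list.collapse)
qed

lemma pcat_pw: "pcat (pw l a) (pw l b) = pw l (a @ b)"
proof -
  have "pw l (a @ b) = concat (map (ex l) a) @ pw l b" by (simp add: pw_def)
  also have "\<dots> = concat (map (ex l) a) @ v0 # tl (pw l b)" using pw_hd by metis
  finally show ?thesis by (simp add: pcat_def pw_def)
qed

lemma prep_pw: "prep a (pw l w) = pw l (concat (replicate a w))"
proof (induction a)
  case 0
  have "hd (pw l w) = v0" using pw_hd[of l w] by (metis list.sel(1))
  thus ?case by (simp add: pw_def)
next
  case (Suc a) thus ?case by (simp add: pcat_pw)
qed

lemma pcats_pw: "pcats (map (pw l) ws) = pw l (concat ws)"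
proof (induction ws)
  case Nil thus ?case by (simp add: pcats_def pw_def)
next
  case (Cons a ws)
  have "pcats (map (pw l) (a # ws)) = pcat (pw l a) (pcats (map (pw l) ws))"
    by (simp add: pcats_def)
  thus ?case using Cons by (simp add: pcat_pw)
qed

lemma loop_pw: "loop = pw l [None]" by (simp add: loop_def pw_def)
lemma cycl_pw: "cycl l m = pw l [Some m]" by (simp add: cycl_def pw_def)

definition DW :: "nat \<Rightarrow> (nat \<Rightarrow> nat) \<Rightarrow> nat \<Rightarrow> nat option list" where
  "DW n l i =
    (if n = 0 then replicate 10 None
     else (let S = (\<Sum>m\<in>{1..n}. l m); k = 2 * (1 + S) in
       if i = 1 then
         concat (map (\<lambda>a. replicate a None @ [Some 1, Some 1]) [1..<k + 1])
                @ [None] @ concat (map (\<lambda>m. [Some m, Some m]) [2..<n + 1]) @ [None]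
       else if i \<le> n then
         [None] @ concat (map (\<lambda>m. [Some m, Some m]) [i..<n + 1]) @ [None]
       else replicate ((n + 2)^2 * S) None))"

lemma concat_rep1: "concat (replicate a [x]) = replicate a x"
  by (induction a) auto

lemma Ppath_pw: "Ppath n l i = pw l (DW n l i)"
proof -
  have A: "map (\<lambda>a. pcat (prep a loop) (prep 2 (cycl l 1))) xs
      = map (pw l) (map (\<lambda>a. replicate a None @ [Some 1, Some 1]) xs)" for xs
    by (simp add: loop_pw[of l] cycl_pw prep_pw pcat_pw numeral_2_eq_2)
  have B: "map (\<lambda>m. prep 2 (cycl l m)) xs = map (pw l) (map (\<lambda>m. [Some m, Some m]) xs)" for xs
    by (simp add: cycl_pw prep_pw numeral_2_eq_2)
  have L: "[loop] = map (pw l) [[None]]" by (simp add: loop_pw[of l])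
  have R: "prep a loop = pw l (replicate a None)" for a
    by (simp add: loop_pw[of l] prep_pw concat_rep1)
  show ?thesis
  proof (cases "n = 0")
    case True thus ?thesis by (simp add: Ppath_def DW_def R)
  next
    case False
    show ?thesis
      unfolding Ppath_def DW_def Let_def unfolding A B L unfolding R
      by (simp only: False if_False map_append[symmetric] pcats_pw concat_append concat.simps append_Nil2 if_distrib[of "pw l"] flip: list.map)
  qed
qed

lemma length_ex[simp]: "length (ex l None) = 1" "length (ex l (Some m)) = max 1 (l m)"
  by auto

lemma wt_Nil[simp]: "wt l [] = 0" and wt_Cons[simp]: "wt l (a # w) = length (ex l a) + wt l w"
  and wt_append[simp]: "wt l (u @ v) = wt l u + wt l v"
  by (auto simp: wt_def)

lemma length_pw[simp]: "length (pw l w) = wt l w + 1"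
  by (simp add: pw_def wt_def)

lemma pw_Cons: "pw l (a # w) = ex l a @ pw l w"
  by (simp add: pw_def)

lemma pw_append: "pw l (u @ v) = concat (map (ex l) u) @ pw l v"
  by (simp add: pw_def)

lemma pw_shift: "c \<le> length w \<Longrightarrow> pw l w ! (wt l (take c w) + t) = pw l (drop c w) ! t"
proof -
  have "pw l w = pw l (take c w @ drop c w)" by simp
  also have "\<dots> = concat (map (ex l) (take c w)) @ pw l (drop c w)" by (rule pw_append)
  finally show ?thesis by (simp add: wt_def nth_append)
qed

lemma ex_nth: "t < l m \<Longrightarrow> ex l (Some m) ! t = cv m t"
  by (cases t) (auto simp: cv_def v0_def nth_Cons')

lemma pw_Cons_lt: "t < length (ex l a) \<Longrightarrow> pw l (a # w) ! t = ex l a ! t"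
  by (simp add: pw_Cons nth_append)

lemma pw_Cons_ge: "pw l (a # w) ! (length (ex l a) + t) = pw l w ! t"
  by (simp add: pw_Cons nth_append)

lemma pw_0[simp]: "pw l w ! 0 = v0"
  by (metis pw_hd nth_Cons_0)

lemma pw_last: "pw l w ! wt l w = v0"
  by (simp add: pw_def wt_def nth_append)

lemma decomp: "t < wt l w \<Longrightarrow> \<exists>c<length w. wt l (take c w) \<le> t \<and> t < wt l (take c w) + length (ex l (w!c))
   \<and> pw l w ! t = ex l (w!c) ! (t - wt l (take c w))"
proof (induction w arbitrary: t)
  case Nil thus ?case by simp
next
  case (Cons a w)
  show ?case
  proof (cases "t < length (ex l a)")
    case True
    thus ?thesis by (intro exI[of _ 0]) (auto simp: pw_Cons_lt)
  next
    case False
    then obtain t' where t': "t = length (ex l a) + t'" by (metis le_Suc_ex not_less)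
    with Cons.prems have "t' < wt l w" by simp
    from Cons.IH[OF this] obtain c where c: "c<length w" "wt l (take c w) \<le> t'"
      "t' < wt l (take c w) + length (ex l (w!c))" "pw l w ! t' = ex l (w!c) ! (t' - wt l (take c w))" by blast
    show ?thesis
      by (intro exI[of _ "Suc c"]) (use c t' in \<open>auto simp: pw_Cons_ge\<close>)
  qed
qed

lemma set_pw: "set (pw l w) \<subseteq> insert v0 {(m,j). Some m \<in> set w \<and> 1 \<le> j \<and> j < l m}"
  by (induction w) (auto simp: pw_def split: option.splits;  case_tac a; auto)+



lemma DW_start: assumes "1 \<le> m" "m \<le> n"
  shows "DW n l m = None # Some m # Some m # drop 3 (DW n l m)"
proof (cases "m = 1")
  case True
  define S where "S = (\<Sum>m\<in>{1..n}. l m)"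
  have u: "[1..<2 * (1 + S) + 1] = 1 # [Suc 1..<2 * (1 + S) + 1]" by (rule upt_conv_Cons) simp
  show ?thesis using assms True unfolding DW_def Let_def S_def[symmetric] u by simp
next
  case False
  have u: "[m..<n + 1] = m # [Suc m..<n + 1]" using assms by (intro upt_conv_Cons) simp
  show ?thesis using assms False unfolding DW_def Let_def u by simp
qed

lemma DW_top: "1 \<le> n \<Longrightarrow> DW n l (Suc n) = replicate ((n + 2)^2 * (\<Sum>m\<in>{1..n}. l m)) None"
  by (simp add: DW_def Let_def)

lemma DW_zero: "DW 0 l i = replicate 10 None"
  by (simp add: DW_def)

lemma DW_set: assumes "1 \<le> m" "Some m' \<in> set (DW n l m)"
  shows "1 \<le> m' \<and> m' \<le> n \<and> (2 \<le> m \<longrightarrow> m \<le> m')"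
  using assms unfolding DW_def Let_def
  by (auto split: if_splits)

lemma DW_hd: "DW n l m \<noteq> [] \<Longrightarrow> hd (DW n l m) = None"
  unfolding DW_def Let_def by (auto simp: upt_conv_Cons)



lemma wt_rep_None[simp]: "wt l (replicate a None) = a"
  by (induction a) auto

lemma clen_Suc: "1 \<le> m \<Longrightarrow> m \<le> Suc n \<Longrightarrow> clen (Suc n) m = wt (clen n) (DW n (clen n) m)"
  by (simp add: Ppath_pw)

lemma clen_bound: "1 \<le> n \<Longrightarrow> 1 \<le> m \<Longrightarrow> m \<le> n \<Longrightarrow> n + 2 \<le> clen n m"
proof (induction n arbitrary: m)
  case 0 thus ?case by simp
next
  case (Suc n)
  show ?case
  proof (cases "n = 0")
    case True
    with Suc.prems have "m = 1" by simp
    thus ?thesis using True by (simp add: Ppath_pw DW_zero)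
  next
    case False
    hence n1: "1 \<le> n" by simp
    show ?thesis
    proof (cases "m \<le> n")
      case True
      have IH: "n + 2 \<le> clen n m" using Suc.IH[OF n1 Suc.prems(2) True] .
      have "clen (Suc n) m = wt (clen n) (DW n (clen n) m)" using Suc.prems by (intro clen_Suc) simp_all
      also have "\<dots> = wt (clen n) (None # Some m # Some m # drop 3 (DW n (clen n) m))"
        using DW_start[OF Suc.prems(2) True] by metis
      also have "\<dots> \<ge> 2 * clen n m" by simp
      finally show ?thesis using IH by simp
    next
      case False
      hence m: "m = Suc n" using Suc.prems by simp
      have c1: "n + 2 \<le> clen n 1" using Suc.IH[OF n1] n1 by simp
      have "clen n 1 \<le> (\<Sum>m\<in>{1..n}. clen n m)"
        by (rule member_le_sum) (use n1 in auto)
      hence S: "n + 2 \<le> (\<Sum>m\<in>{1..n}. clen n m)" using c1 by simp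
      have "clen (Suc n) m = (n + 2)^2 * (\<Sum>m\<in>{1..n}. clen n m)"
        using m by (subst clen_Suc) (simp_all add: DW_top[OF n1])
      also have "\<dots> \<ge> (n+2)^2 * 1" using S by (intro mult_le_mono2) simp
      finally show ?thesis by (simp add: power2_eq_square)
    qed
  qed
qed

lemma clen_ge2: "1 \<le> m \<Longrightarrow> m \<le> n \<Longrightarrow> 2 \<le> clen n m"
  using clen_bound[of n m] by simp

lemma clen0: "m = 0 \<or> n < m \<Longrightarrow> clen n m = 0"
  by (cases n) auto

lemma cyc_pw: "cyc n m = pw (clen n) [Some m]"
  by (simp add: cyc_def cycl_pw)

lemma length_cyc: "1 \<le> clen n m \<Longrightarrow> length (cyc n m) = clen n m + 1"
  by (simp add: cyc_pw)

lemma cyc_nth: "1 \<le> clen n m \<Longrightarrow> t \<le> clen n m \<Longrightarrow>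
   cyc n m ! t = (if t = 0 \<or> t = clen n m then v0 else (m,t))"
  by (auto simp: cyc_def cycl_def nth_append nth_Cons' v0_def)

lemma E_iff: "(u,w) \<in> E n \<longleftrightarrow> (u = v0 \<and> w = v0) \<or>
  (\<exists>m t. 1 \<le> m \<and> m \<le> n \<and> t < clen n m \<and> u = cyc n m ! t \<and> w = cyc n m ! Suc t)"
proof -
  have "(u,w) \<in> set (zip (cyc n m) (tl (cyc n m))) \<longleftrightarrow>
     (\<exists>t. t < clen n m \<and> u = cyc n m ! t \<and> w = cyc n m ! Suc t)" if "1 \<le> m" "m \<le> n" for m
  proof -
    have L: "length (cyc n m) = clen n m + 1" using length_cyc clen_ge2[OF that] by simp
    show ?thesis unfolding set_zip using L by (auto simp: nth_tl)
  qed
  thus ?thesis unfolding E_def by auto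
qed



declare clen.simps(2)[simp del]

lemma v0_eq: "v0 = (0,0)" by (simp add: v0_def)

lemma cyc_val: "1 \<le> m \<Longrightarrow> m \<le> n \<Longrightarrow> t \<le> clen n m \<Longrightarrow>
   cyc n m ! t = (if t = 0 \<or> t = clen n m then v0 else (m,t))"
  using cyc_nth[of n m t] clen_ge2[of m n] by simp

lemma E_succ: assumes "((m,t), w) \<in> E n" "1 \<le> t"
  shows "w = (if Suc t = clen n m then v0 else (m, Suc t))"
proof -
  have "(m,t) \<noteq> v0" using assms(2) by (simp add: v0_eq)
  then obtain m' t' where h: "1 \<le> m'" "m' \<le> n" "t' < clen n m'" "(m,t) = cyc n m' ! t'" "w = cyc n m' ! Suc t'"
    using assms(1) unfolding E_iff by blast
  have "(m,t) = (if t' = 0 \<or> t' = clen n m' then v0 else (m',t'))" using h cyc_val[of m' n t'] by simp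
  hence "m = m'" "t = t'" using \<open>(m,t) \<noteq> v0\<close> h(3) by (auto split: if_splits)
  thus ?thesis using h cyc_val[of m' n "Suc t'"] by auto
qed

lemma E_pred: assumes "(u, (m,r)) \<in> E n" "2 \<le> r"
  shows "u = (m, r - 1)"
proof -
  have "(m,r) \<noteq> v0" using assms(2) by (simp add: v0_eq)
  then obtain m' t' where h: "1 \<le> m'" "m' \<le> n" "t' < clen n m'" "u = cyc n m' ! t'" "(m,r) = cyc n m' ! Suc t'"
    using assms(1) unfolding E_iff by blast
  have "(m,r) = (if Suc t' = clen n m' then v0 else (m',Suc t'))" using h cyc_val[of m' n "Suc t'"] by simp
  hence "m = m'" "r = Suc t'" using \<open>(m,r) \<noteq> v0\<close> by (auto split: if_splits)
  thus ?thesis using h cyc_val[of m' n t'] assms(2) by auto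
qed

lemma E_v0: assumes "(v0, w) \<in> E n"
  shows "w = v0 \<or> (\<exists>m. 1 \<le> m \<and> m \<le> n \<and> w = (m,1))"
proof (cases "w = v0")
  case False
  then obtain m' t' where h: "1 \<le> m'" "m' \<le> n" "t' < clen n m'" "v0 = cyc n m' ! t'" "w = cyc n m' ! Suc t'"
    using assms(1) unfolding E_iff by blast
  have "v0 = (if t' = 0 \<or> t' = clen n m' then v0 else (m',t'))" using h cyc_val[of m' n t'] by simp
  hence "t' = 0" using h(1) h(3) by (simp add: v0_eq split: if_splits)
  thus ?thesis using h cyc_val[of m' n 1] clen_ge2[of m' n] by auto
qed simp

lemma E_cyc: "1 \<le> m \<Longrightarrow> m \<le> n \<Longrightarrow> t < clen n m \<Longrightarrow> (cyc n m ! t, cyc n m ! Suc t) \<in> E n"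
  unfolding E_iff by blast

lemma E_loop: "(v0, v0) \<in> E n"
  unfolding E_iff by blast

lemma succ_nth: "successively P xs \<Longrightarrow> Suc t < length xs \<Longrightarrow> P (xs!t) (xs ! Suc t)"
proof (induction xs arbitrary: t)
  case Nil thus ?case by simp
next
  case (Cons a xs)
  show ?case
  proof (cases t)
    case 0 thus ?thesis using Cons.prems by (cases xs) auto
  next
    case (Suc t') thus ?thesis using Cons by (cases xs) auto
  qed
qed

lemma succ_of_nth: "(\<And>t. Suc t < length xs \<Longrightarrow> P (xs!t) (xs ! Suc t)) \<Longrightarrow> successively P xs"
proof (induction xs)
  case Nil thus ?case by simp
next
  case (Cons a xs)
  have "successively P xs" using Cons.prems by (intro Cons.IH) (metis Suc_less_eq length_Cons nth_Cons_Suc)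
  moreover have "xs = [] \<or> P a (hd xs)" using Cons.prems[of 0] by (cases xs) auto
  ultimately show ?case by (auto simp: successively_Cons)
qed

lemma ex_cyc: "1 \<le> m \<Longrightarrow> m \<le> n \<Longrightarrow> t < clen n m \<Longrightarrow> ex (clen n) (Some m) ! t = cyc n m ! t"
  using ex_nth[of t "clen n" m] cyc_val[of m n t] by (simp add: cv_def)

lemma pw_path: "(\<And>m. Some m \<in> set w \<Longrightarrow> 1 \<le> m \<and> m \<le> n) \<Longrightarrow>
   successively (\<lambda>a b. (a,b) \<in> E n) (pw (clen n) w)"
proof (induction w)
  case Nil thus ?case by (simp add: pw_def)
next
  case (Cons a w)
  have IH: "successively (\<lambda>a b. (a,b) \<in> E n) (pw (clen n) w)" using Cons by simp
  have hd: "hd (pw (clen n) w) = v0" by (metis pw_hd list.sel(1))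
  show ?case
  proof (cases a)
    case None
    have "pw (clen n) w \<noteq> []" by (metis pw_hd list.distinct(1))
    thus ?thesis using IH hd None by (simp add: pw_Cons E_loop successively_Cons)
  next
    case (Some m)
    have m: "1 \<le> m" "m \<le> n" using Cons.prems Some by auto
    have L: "2 \<le> clen n m" using clen_ge2 m by simp
    have s1: "successively (\<lambda>a b. (a,b) \<in> E n) (ex (clen n) (Some m))"
    proof (rule succ_of_nth)
      fix t assume "Suc t < length (ex (clen n) (Some m))"
      hence t: "Suc t < clen n m" using L by simp
      show "(ex (clen n) (Some m) ! t, ex (clen n) (Some m) ! Suc t) \<in> E n"
        using ex_cyc[OF m, of t] ex_cyc[OF m, of "Suc t"] t E_cyc[OF m, of t] by simp
    qed
    have "last (ex (clen n) (Some m)) = ex (clen n) (Some m) ! (clen n m - 1)"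
      using L by (simp add: last_conv_nth)
    also have "\<dots> = cyc n m ! (clen n m - 1)" using L by (intro ex_cyc m) simp
    finally have la: "last (ex (clen n) (Some m)) = cyc n m ! (clen n m - 1)" .
    have "(cyc n m ! (clen n m - 1), cyc n m ! Suc (clen n m - 1)) \<in> E n"
      using L by (intro E_cyc m) simp
    moreover have "cyc n m ! Suc (clen n m - 1) = v0" using L cyc_val[OF m, of "clen n m"] by simp
    ultimately have "(last (ex (clen n) (Some m)), hd (pw (clen n) w)) \<in> E n" using la hd by simp
    have "successively (\<lambda>a b. (a,b) \<in> E n) (ex (clen n) (Some m) @ pw (clen n) w)"
      unfolding successively_append_iff using s1 IH \<open>(last (ex (clen n) (Some m)), hd (pw (clen n) w)) \<in> E n\<close> by blast
    thus ?thesis using Some by (simp only: pw_Cons)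
  qed
qed

lemma phi_v0[simp]: "phi n v0 = v0" by (simp add: phi_def)

lemma Plen: "1 \<le> m \<Longrightarrow> m \<le> Suc n \<Longrightarrow> length (Ppath n (clen n) m) = clen (Suc n) m + 1"
  by (simp add: clen_Suc Ppath_pw)

lemma phi_cyc: assumes "1 \<le> m" "m \<le> Suc n" "t \<le> clen (Suc n) m"
  shows "phi n (cyc (Suc n) m ! t) = Ppath n (clen n) m ! t"
proof -
  have c: "cyc (Suc n) m ! t = (if t = 0 \<or> t = clen (Suc n) m then v0 else (m,t))"
    using cyc_val[of m "Suc n" t] assms by simp
  show ?thesis
  proof (cases "t = 0 \<or> t = clen (Suc n) m")
    case True
    thus ?thesis using c assms by (auto simp: Ppath_pw pw_last clen_Suc)
  next
    case False
    thus ?thesis using c by (simp add: phi_def v0_eq)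
  qed
qed

lemma P_path: assumes "1 \<le> m" shows "successively (\<lambda>a b. (a,b) \<in> E n) (Ppath n (clen n) m)"
  unfolding Ppath_pw
proof (rule pw_path)
  fix m' assume "Some m' \<in> set (DW n (clen n) m)"
  thus "1 \<le> m' \<and> m' \<le> n" using DW_set[OF assms, of m' n "clen n"] by simp
qed

lemma phi_hom: assumes "(u,w) \<in> E (Suc n)" shows "(phi n u, phi n w) \<in> E n"
proof -
  have "(u = v0 \<and> w = v0) \<or>
  (\<exists>m t. 1 \<le> m \<and> m \<le> Suc n \<and> t < clen (Suc n) m \<and> u = cyc (Suc n) m ! t \<and> w = cyc (Suc n) m ! Suc t)"
    using assms by (simp only: E_iff)
  thus ?thesis
  proof (elim disjE exE conjE)
    assume "u = v0" "w = v0" thus ?thesis by (simp add: E_loop)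
  next
    fix m t assume h: "1 \<le> m" "m \<le> Suc n" "t < clen (Suc n) m" "u = cyc (Suc n) m ! t" "w = cyc (Suc n) m ! Suc t"
    have t1: "t \<le> clen (Suc n) m" "Suc t \<le> clen (Suc n) m" using h(3) by linarith+
    have a: "phi n u = Ppath n (clen n) m ! t" unfolding h(4) by (rule phi_cyc[OF h(1) h(2) t1(1)])
    have b: "phi n w = Ppath n (clen n) m ! Suc t" unfolding h(5) by (rule phi_cyc[OF h(1) h(2) t1(2)])
    have "Suc t < length (Ppath n (clen n) m)" unfolding Plen[OF h(1) h(2)] using h(3) by linarith
    from succ_nth[OF P_path[OF h(1)] this] show ?thesis unfolding a b .
  qed
qed

lemma V_iff: "u \<in> V n \<longleftrightarrow> u = v0 \<or> (1 \<le> fst u \<and> fst u \<le> n \<and> 1 \<le> snd u \<and> snd u < clen n (fst u))"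
  by (cases u) (auto simp: V_def)

lemma set_P: "1 \<le> m \<Longrightarrow> set (Ppath n (clen n) m) \<subseteq> V n"
proof -
  assume m: "1 \<le> m"
  have "set (Ppath n (clen n) m) \<subseteq> insert v0 {(m',j). Some m' \<in> set (DW n (clen n) m) \<and> 1 \<le> j \<and> j < clen n m'}"
    unfolding Ppath_pw by (rule set_pw)
  also have "\<dots> \<subseteq> V n" using DW_set[OF m] by (auto simp: V_iff)
  finally show ?thesis .
qed

lemma phi_V: assumes "u \<in> V (Suc n)" shows "phi n u \<in> V n"
proof (cases "u = v0")
  case False
  then obtain m t where u: "u = (m,t)" "1 \<le> m" "m \<le> Suc n" "1 \<le> t" "t < clen (Suc n) m"
    using assms by (cases u) (auto simp: V_iff)
  have "phi n u = Ppath n (clen n) m ! t" using u False by (simp add: phi_def)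
  moreover have "t < length (Ppath n (clen n) m)" using u Plen by simp
  ultimately show ?thesis using set_P[OF u(2)] by (metis nth_mem subsetD)
qed (simp add: V_def)

lemma cyc_V: "1 \<le> m \<Longrightarrow> m \<le> n \<Longrightarrow> t \<le> clen n m \<Longrightarrow> cyc n m ! t \<in> V n"
  using cyc_val[of m n t] by (auto simp: V_iff)

lemma E_V: assumes "(u,w) \<in> E n" shows "w \<in> V n"
proof -
  { assume "w = v0" hence ?thesis by (simp add: V_def) }
  moreover
  { fix m t assume h: "1 \<le> m" "m \<le> n" "t < clen n m" "w = cyc n m ! Suc t"
    hence ?thesis using cyc_V[of m n "Suc t"] by simp }
  ultimately show ?thesis using assms unfolding E_iff by blast
qed



lemma X_V: "x \<in> X \<Longrightarrow> x l \<in> V l" by (simp add: X_def)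
lemma X_phi: "x \<in> X \<Longrightarrow> phi l (x (Suc l)) = x l" by (simp add: X_def)

fun pd :: "nat \<Rightarrow> nat \<Rightarrow> vert \<Rightarrow> vert" where
  "pd 0 l v = v"
| "pd (Suc d) l v = phi l (pd d (Suc l) v)"

lemma pd_X: "x \<in> X \<Longrightarrow> pd d l (x (l + d)) = x l"
proof (induction d arbitrary: l)
  case (Suc d)
  have "pd d (Suc l) (x (Suc l + d)) = x (Suc l)" using Suc by blast
  thus ?case using X_phi[OF Suc.prems] by simp
qed simp

lemma pd_v0[simp]: "pd d l v0 = v0"
  by (induction d arbitrary: l) auto

lemma pd_top: "pd (Suc d) l v = pd d l (phi (l + d) v)"
  by (induction d arbitrary: l) auto

lemma pd_V: "v \<in> V (l + d) \<Longrightarrow> pd d l v \<in> V l"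
  by (induction d arbitrary: l) (auto intro: phi_V)

lemma pd_E: "(u,w) \<in> E (l + d) \<Longrightarrow> (pd d l u, pd d l w) \<in> E l"
  by (induction d arbitrary: l) (auto intro: phi_hom)

lemma X_up: assumes "x \<in> X" "x l \<noteq> v0" "l \<le> l'" shows "x l' \<noteq> v0"
proof
  assume "x l' = v0"
  have "x l = pd (l' - l) l (x (l + (l' - l)))" using pd_X[OF assms(1)] by simp
  also have "\<dots> = v0" using \<open>x l' = v0\<close> assms(3) by simp
  finally show False using assms(2) by simp
qed

definition nxt :: "nat \<Rightarrow> vert \<Rightarrow> vert" where
  "nxt l u = (if Suc (snd u) = clen l (fst u) then v0 else (fst u, Suc (snd u)))"

lemma V_nz: "u \<in> V l \<Longrightarrow> u \<noteq> v0 \<Longrightarrow> \<exists>m t. u = (m,t) \<and> 1 \<le> m \<and> m \<le> l \<and> 1 \<le> t \<and> t < clen l m"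
  by (cases u) (auto simp: V_iff)

lemma nxt_E: assumes "u \<in> V l" "u \<noteq> v0" shows "(u, nxt l u) \<in> E l" "nxt l u \<in> V l"
proof -
  obtain m t where h: "u = (m,t)" "1 \<le> m" "m \<le> l" "1 \<le> t" "t < clen l m" using V_nz[OF assms] by blast
  have "(cyc l m ! t, cyc l m ! Suc t) \<in> E l" using E_cyc h by simp
  moreover have "cyc l m ! t = u" "cyc l m ! Suc t = nxt l u"
    using cyc_val[of m l t] cyc_val[of m l "Suc t"] h by (auto simp: nxt_def)
  ultimately show "(u, nxt l u) \<in> E l" by simp
  thus "nxt l u \<in> V l" by (rule E_V)
qed

lemma E_nz: assumes "(u,w) \<in> E l" "u \<in> V l" "u \<noteq> v0" shows "w = nxt l u"
proof -
  obtain m t where h: "u = (m,t)" "1 \<le> t" using V_nz[OF assms(2,3)] by blast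
  show ?thesis using E_succ[of m t w l] assms h by (simp add: nxt_def)
qed

lemma nxt_phi: assumes "x \<in> X" "x l \<noteq> v0"
  shows "phi l (nxt (Suc l) (x (Suc l))) = nxt l (x l)"
proof -
  have s: "x (Suc l) \<noteq> v0" using X_up[OF assms] by simp
  have "(x (Suc l), nxt (Suc l) (x (Suc l))) \<in> E (Suc l)" using nxt_E X_V[OF assms(1)] s by blast
  from phi_hom[OF this] have "(x l, phi l (nxt (Suc l) (x (Suc l)))) \<in> E l" using X_phi[OF assms(1)] by simp
  thus ?thesis using E_nz X_V[OF assms(1)] assms(2) by blast
qed

lemma P_1: assumes "1 \<le> m" "m \<le> Suc l" shows "Ppath l (clen l) m ! 1 = v0"
proof -
  have "3 \<le> clen (Suc l) m" using clen_bound[of "Suc l" m] assms by simp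
  hence "DW l (clen l) m \<noteq> []" using clen_Suc[OF assms] by auto
  then obtain r where r: "DW l (clen l) m = None # r" using DW_hd by (metis list.collapse)
  show ?thesis unfolding Ppath_pw r by (simp add: pw_Cons)
qed

lemma T_exists: assumes "x \<in> X" shows "\<exists>y. y \<in> X \<and> (\<forall>l. (x l, y l) \<in> E l)"
proof (cases "\<forall>l. x l = v0")
  case True
  have "(\<lambda>l. v0) \<in> X" by (simp add: X_def V_def)
  thus ?thesis using True E_loop by auto
next
  case False
  then obtain M where M: "x M \<noteq> v0" by blast
  have nz: "M \<le> l \<Longrightarrow> x l \<noteq> v0" for l using X_up[OF assms M] by blast
  define y where "y l = (if M \<le> l then nxt l (x l) else pd (M - l) l (nxt M (x M)))" for l
  have yV: "y l \<in> V l" for l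
  proof (cases "M \<le> l")
    case True thus ?thesis using nxt_E(2) X_V[OF assms] nz by (simp add: y_def)
  next
    case False
    have "nxt M (x M) \<in> V (l + (M - l))" using nxt_E(2) X_V[OF assms] M False by simp
    thus ?thesis using False by (simp add: y_def pd_V)
  qed
  have yphi: "phi l (y (Suc l)) = y l" for l
  proof (cases "M \<le> l")
    case True thus ?thesis using nxt_phi[OF assms nz[OF True]] by (simp add: y_def)
  next
    case False
    show ?thesis
    proof (cases "Suc l = M")
      case True hence "M - l = Suc 0" by simp
      thus ?thesis using True by (simp add: y_def)
    next
      case False2: False
      have "M - l = Suc (M - Suc l)" using False False2 by simp
      thus ?thesis using False False2 by (simp add: y_def)
    qed
  qed
  have yE: "(x l, y l) \<in> E l" for l
  proof (cases "M \<le> l")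
    case True thus ?thesis using nxt_E(1) X_V[OF assms] nz by (simp add: y_def)
  next
    case False
    have "(x M, nxt M (x M)) \<in> E (l + (M - l))" using nxt_E(1) X_V[OF assms] M False by simp
    from pd_E[OF this] have "(pd (M - l) l (x (l + (M - l))), y l) \<in> E l" using False by (simp add: y_def)
    thus ?thesis using pd_X[OF assms] by simp
  qed
  have "y \<in> X" using yV yphi by (simp add: X_def)
  thus ?thesis using yE by blast
qed

lemma T_unique: assumes "x \<in> X" "y \<in> X" "\<forall>l. (x l, y l) \<in> E l" "y' \<in> X" "\<forall>l. (x l, y' l) \<in> E l"
  shows "y = y'"
proof (cases "\<forall>l. x l = v0")
  case True
  have z: "z l = v0" if z: "z \<in> X" "\<forall>l. (x l, z l) \<in> E l" for z l
  proof (rule ccontr)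
    assume ne: "z l \<noteq> v0"
    from E_v0[of "z (Suc l)" "Suc l"] z True
    have "z (Suc l) = v0 \<or> (\<exists>m. 1 \<le> m \<and> m \<le> Suc l \<and> z (Suc l) = (m, 1))" by metis
    hence "phi l (z (Suc l)) = v0"
    proof
      assume "\<exists>m. 1 \<le> m \<and> m \<le> Suc l \<and> z (Suc l) = (m, 1)"
      then obtain m where "1 \<le> m" "m \<le> Suc l" "z (Suc l) = (m,1)" by blast
      thus ?thesis using P_1 by (simp add: phi_def v0_eq)
    qed simp
    thus False using X_phi[OF z(1)] ne by simp
  qed
  show ?thesis using z[OF assms(2,3)] z[OF assms(4,5)] by auto
next
  case False
  then obtain M where M: "x M \<noteq> v0" by blast
  have nz: "M \<le> l \<Longrightarrow> x l \<noteq> v0" for l using X_up[OF assms(1) M] by blast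
  have up: "y l = y' l" if "M \<le> l" for l
    using E_nz[OF _ X_V[OF assms(1)] nz[OF that]] assms(3,5) by metis
  show ?thesis
  proof
    fix l show "y l = y' l"
    proof (cases "M \<le> l")
      case False
      have "y l = pd (M - l) l (y (l + (M - l)))" using pd_X[OF assms(2)] by simp
      also have "\<dots> = pd (M - l) l (y' (l + (M - l)))" using up False by simp
      also have "\<dots> = y' l" using pd_X[OF assms(4)] by simp
      finally show ?thesis .
    qed (rule up)
  qed
qed

lemma T_spec: assumes "x \<in> X" shows "T x \<in> X" "\<forall>l. (x l, T x l) \<in> E l"
proof -
  obtain y where y: "y \<in> X" "\<forall>l. (x l, y l) \<in> E l" using T_exists[OF assms] by blast
  have "T x = y" unfolding T_def
    by (rule the_equality) (use y T_unique[OF assms] in blast)+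
  thus "T x \<in> X" "\<forall>l. (x l, T x l) \<in> E l" using y by auto
qed

lemma Tn_X: "x \<in> X \<Longrightarrow> (T ^^ j) x \<in> X"
  by (induction j) (auto simp: T_spec)

lemma T_iter: assumes "x \<in> X" "x l = (m,t)" "1 \<le> t" "t + j < clen l m"
  shows "(T ^^ j) x l = (m, t + j)"
  using assms(4)
proof (induction j)
  case 0 thus ?case using assms by simp
next
  case (Suc j)
  have h: "(T ^^ j) x l = (m, t + j)" using Suc by simp
  have X': "(T ^^ j) x \<in> X" by (rule Tn_X[OF assms(1)])
  have "(T ((T ^^ j) x)) l = (if Suc (t + j) = clen l m then v0 else (m, Suc (t + j)))"
    using E_succ[of m "t+j" "T ((T ^^ j) x) l" l] T_spec(2)[OF X', rule_format, of l] h assms(3) by simp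
  thus ?case using Suc.prems by simp
qed

lemma T_back: assumes "x \<in> X" "T x l = (m,r)" "2 \<le> r" shows "x l = (m, r - 1)"
proof -
  have "(x l, (m,r)) \<in> E l" using T_spec(2)[OF assms(1)] assms(2) by metis
  thus ?thesis using E_pred assms(3) by blast
qed

lemma deg_le: "deg x \<le> vdeg (x l)"
  unfolding deg_def by (rule INF_lower) simp

lemma deg_ge: "(\<And>l. c \<le> vdeg (x l)) \<Longrightarrow> c \<le> deg x"
  unfolding deg_def by (rule INF_greatest)

lemma vdeg_pair: "1 \<le> t \<Longrightarrow> vdeg (m,t) = enat m"
  by (simp add: vdeg_def v0_eq)

lemma deg_T: assumes "x \<in> X" shows "deg x \<le> deg (T x)"
proof (rule deg_ge)
  fix l
  have TX: "T x \<in> X" and TE: "\<forall>l. (x l, T x l) \<in> E l" using T_spec[OF assms] by auto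
  show "deg x \<le> vdeg (T x l)"
  proof (cases "T x l = v0")
    case True thus ?thesis by (simp add: vdeg_def)
  next
    case Tnz: False
    show ?thesis
    proof (cases "x l = v0")
      case False
      obtain m t where h: "x l = (m,t)" "1 \<le> t" using V_nz[OF X_V[OF assms] False] by blast
      have "T x l = nxt l (x l)" using E_nz TE X_V[OF assms] False by blast
      hence "T x l = (m, Suc t)" using Tnz h by (simp add: nxt_def split: if_splits)
      hence "vdeg (T x l) = vdeg (x l)" using h by (simp add: vdeg_pair)
      thus ?thesis using deg_le[of x l] by simp
    next
      case True
      obtain m' r where tl: "T x l = (m',r)" "1 \<le> r" using V_nz[OF X_V[OF TX] Tnz] by blast
      have xs: "x (Suc l) \<noteq> v0"
      proof
        assume x0: "x (Suc l) = v0"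
        from E_v0[of "T x (Suc l)" "Suc l"] TE x0
        have "T x (Suc l) = v0 \<or> (\<exists>m. 1 \<le> m \<and> m \<le> Suc l \<and> T x (Suc l) = (m, 1))" by metis
        hence "phi l (T x (Suc l)) = v0"
        proof
          assume "\<exists>m. 1 \<le> m \<and> m \<le> Suc l \<and> T x (Suc l) = (m, 1)"
          then obtain m where "1 \<le> m" "m \<le> Suc l" "T x (Suc l) = (m,1)" by blast
          thus ?thesis using P_1 by (simp add: phi_def v0_eq)
        qed simp
        thus False using X_phi[OF TX] Tnz by simp
      qed
      obtain m'' t where h: "x (Suc l) = (m'',t)" "1 \<le> m''" "m'' \<le> Suc l" "1 \<le> t" "t < clen (Suc l) m''"
        using V_nz[OF X_V[OF assms] xs] by blast
      have "T x (Suc l) = nxt (Suc l) (x (Suc l))" using E_nz TE X_V[OF assms] xs by blast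
      moreover have "T x (Suc l) \<noteq> v0" using X_phi[OF TX, of l] Tnz by auto
      ultimately have T2: "T x (Suc l) = (m'', Suc t)" using h by (simp add: nxt_def split: if_splits)
      have "T x l = Ppath l (clen l) m'' ! Suc t"
        using X_phi[OF TX, of l] T2 by (simp add: phi_def v0_eq)
      moreover have "Suc t < length (Ppath l (clen l) m'')" using Plen[OF h(2,3)] h(5) T2 by simp
      ultimately have "(m',r) \<in> set (Ppath l (clen l) m'')" using tl by (metis nth_mem)
      hence "(m',r) \<in> insert v0 {(m,j). Some m \<in> set (DW l (clen l) m'') \<and> 1 \<le> j \<and> j < clen l m}"
        using set_pw unfolding Ppath_pw by blast
      hence "Some m' \<in> set (DW l (clen l) m'')" using tl(2) by (auto simp: v0_eq)
      from DW_set[OF h(2) this] have "1 \<le> m'" "2 \<le> m'' \<longrightarrow> m'' \<le> m'" by auto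
      hence "enat m'' \<le> enat m' \<or> m'' = 1" by auto
      moreover have "deg x \<le> enat m''" using deg_le[of x "Suc l"] h by (simp add: vdeg_pair)
      ultimately have "deg x \<le> enat m'"
      proof (elim disjE)
        assume "enat m'' \<le> enat m'" "deg x \<le> enat m''" thus ?thesis by (rule order_trans[rotated])
      next
        assume "m'' = 1" "deg x \<le> enat m''"
        moreover have "enat 1 \<le> enat m'" using \<open>1 \<le> m'\<close> by simp
        ultimately show ?thesis by (metis order_trans)
      qed
      thus ?thesis using tl by (simp add: vdeg_pair)
    qed
  qed
qed

lemma deg_Tn: "x \<in> X \<Longrightarrow> deg x \<le> deg ((T ^^ j) x)"
proof (induction j)
  case (Suc j) thus ?case using deg_T[OF Tn_X[OF Suc.prems, of j]] by simp
qed simp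



lemma pw_rep_None: "pw l (replicate a None) = replicate (Suc a) v0"
  by (induction a) (auto simp: pw_def)

lemma P_prefix: assumes "1 \<le> m" "m \<le> l" "t < clen l m"
  shows "Ppath l (clen l) m ! Suc t = cv m t"
proof -
  obtain r where r: "DW l (clen l) m = None # Some m # r" using DW_start[OF assms(1,2)] by metis
  have "Ppath l (clen l) m ! Suc t = pw (clen l) (Some m # r) ! t"
    unfolding Ppath_pw r using pw_Cons_ge[of "clen l" None _ t] by simp
  also have "\<dots> = ex (clen l) (Some m) ! t" using assms(3) by (intro pw_Cons_lt) simp
  also have "\<dots> = cv m t" using assms(3) by (rule ex_nth)
  finally show ?thesis .
qed

lemma P_top: assumes "1 \<le> l" shows "Ppath l (clen l) (Suc l) ! t = v0 \<or> t > clen (Suc l) (Suc l)"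
proof -
  have "Ppath l (clen l) (Suc l) = replicate (Suc ((l + 2)^2 * (\<Sum>m\<in>{1..l}. clen l m))) v0"
    unfolding Ppath_pw DW_top[OF assms] pw_rep_None ..
  moreover have "length (Ppath l (clen l) (Suc l)) = clen (Suc l) (Suc l) + 1" by (rule Plen) auto
  ultimately show ?thesis by (cases "t > clen (Suc l) (Suc l)") (auto simp del: replicate_Suc)
qed

lemma proj: assumes "1 \<le> n" "1 \<le> m" "m \<le> n + D" "1 \<le> ofs" "ofs \<le> D + 1" "ofs < clen (n + D) m"
  shows "pd D n (m,ofs) = (if ofs = D + 1 \<and> m \<le> n then (m,1) else v0)"
  using assms(3-6)
proof (induction D arbitrary: ofs)
  case 0 thus ?case by simp
next
  case (Suc D)
  have pd1: "pd (Suc D) n (m,ofs) = pd D n (phi (n + D) (m,ofs))" by (rule pd_top)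
  have ph: "phi (n + D) (m,ofs) = Ppath (n + D) (clen (n + D)) m ! ofs"
    using Suc.prems by (simp add: phi_def v0_eq)
  show ?case
  proof (cases "m = Suc (n + D)")
    case True
    have "Ppath (n + D) (clen (n + D)) m ! ofs = v0"
      using P_top[of "n + D" ofs] True Suc.prems assms(1) by auto
    thus ?thesis using pd1 ph True by simp
  next
    case False
    hence mle: "m \<le> n + D" using Suc.prems by simp
    have cb: "n + D + 2 \<le> clen (n + D) m" using clen_bound[of "n + D" m] assms(1,2) mle by simp
    obtain ofs1 where ofs1: "ofs = Suc ofs1" using Suc.prems by (cases ofs) auto
    have "phi (n + D) (m,ofs) = cv m ofs1" using ph P_prefix[OF assms(2) mle, of ofs1] ofs1 cb Suc.prems by simp
    show ?thesis
    proof (cases "ofs1 = 0")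
      case True thus ?thesis using pd1 \<open>phi (n + D) (m,ofs) = cv m ofs1\<close> ofs1 by (simp add: cv_def)
    next
      case False
      have "pd D n (m,ofs1) = (if ofs1 = D + 1 \<and> m \<le> n then (m,1) else v0)"
        using Suc.IH[OF mle] False ofs1 Suc.prems cb by simp
      thus ?thesis using pd1 \<open>phi (n + D) (m,ofs) = cv m ofs1\<close> ofs1 False by (simp add: cv_def)
    qed
  qed
qed

definition valid :: "nat \<Rightarrow> nat option list \<Rightarrow> bool" where
  "valid l w = (\<forall>m. Some m \<in> set w \<longrightarrow> 1 \<le> m \<and> m \<le> l)"

lemma zero_view: assumes "1 \<le> n" "valid (n + D) r" "idx \<le> D" "idx < wt (clen (n + D)) r"
  shows "pd D n (pw (clen (n + D)) r ! idx) = v0"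
proof -
  obtain c where c: "c < length r" "wt (clen (n + D)) (take c r) \<le> idx"
    "pw (clen (n + D)) r ! idx = ex (clen (n + D)) (r!c) ! (idx - wt (clen (n + D)) (take c r))"
    "idx < wt (clen (n + D)) (take c r) + length (ex (clen (n + D)) (r!c))"
    using decomp[OF assms(4)] by blast
  define ofs where "ofs = idx - wt (clen (n + D)) (take c r)"
  have oD: "ofs \<le> D" using assms(3) by (simp add: ofs_def)
  show ?thesis
  proof (cases "r ! c")
    case None
    hence "ofs = 0" using c(2,4) by (simp add: ofs_def)
    thus ?thesis using c(3) None by (simp add: ofs_def)
  next
    case (Some m)
    have m: "1 \<le> m" "m \<le> n + D" using assms(2) Some c(1) unfolding valid_def by (metis nth_mem)+
    have cb: "n + D + 2 \<le> clen (n + D) m" using clen_bound[of "n + D" m] assms(1) m by simp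
    have ol: "ofs < clen (n + D) m" using oD cb by simp
    have v: "pw (clen (n + D)) r ! idx = cv m ofs" using c(3) Some ex_nth[of ofs "clen (n + D)" m, OF ol] by (simp add: ofs_def)
    show ?thesis
    proof (cases "ofs = 0")
      case True thus ?thesis using v by (simp add: cv_def)
    next
      case False
      thus ?thesis using v proj[OF assms(1) m, of ofs] oD ol by (simp add: cv_def)
    qed
  qed
qed

fun view :: "nat \<Rightarrow> nat option \<Rightarrow> vert" where
  "view n None = v0"
| "view n (Some m) = (if m \<le> n then (m,1) else v0)"

lemma view_lemma: assumes "1 \<le> n" "valid (n + D) (s @ a # r)"
  "wt (clen (n + D)) s + D + 1 < wt (clen (n + D)) (s @ a # r)"
  shows "pd D n (pw (clen (n + D)) (s @ a # r) ! (wt (clen (n + D)) s + D + 1)) = view n a"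
proof -
  let ?l = "clen (n + D)"
  have "pw ?l (s @ a # r) ! (wt ?l (take (length s) (s @ a # r)) + (D + 1))
      = pw ?l (drop (length s) (s @ a # r)) ! (D + 1)"
    by (rule pw_shift) simp
  hence e: "pw ?l (s @ a # r) ! (wt ?l s + D + 1) = pw ?l (a # r) ! (D + 1)" by (simp add: add.assoc)
  show ?thesis
  proof (cases a)
    case None
    have "pw ?l (a # r) ! (D + 1) = pw ?l r ! D" using None pw_Cons_ge[of ?l None r D] by simp
    moreover have "valid (n + D) r" using assms(2) unfolding valid_def by auto
    moreover have "D < wt ?l r" using assms(3) None by simp
    ultimately show ?thesis using e zero_view[OF assms(1), of D r D] None by simp
  next
    case (Some m)
    have m: "1 \<le> m" "m \<le> n + D" using assms(2) Some unfolding valid_def by auto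
    have cb: "n + D + 2 \<le> clen (n + D) m" using clen_bound[of "n + D" m] assms(1) m by simp
    have "pw ?l (a # r) ! (D + 1) = ex ?l (Some m) ! (D + 1)" unfolding Some by (rule pw_Cons_lt) (use cb in simp)
    also have "\<dots> = (m, D + 1)" using cb by (simp add: ex_nth cv_def)
    finally show ?thesis using e proj[OF assms(1) m, of "D + 1"] cb Some by simp
  qed
qed

lemma view_inj: assumes "a \<noteq> b" "a = None \<or> (\<exists>m. a = Some m \<and> 1 \<le> m \<and> m \<le> n)"
  "b = None \<or> (\<exists>m. b = Some m \<and> 1 \<le> m \<and> m \<le> n)"
  shows "view n a \<noteq> view n b"
  using assms by (auto simp: v0_eq)

lemma first_diff: assumes "a < b" "b < g" "g < length W" "\<forall>t<g. W!t \<noteq> W!g"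
  shows "\<exists>t. b + 1 + t \<le> g \<and> W!(a+1+t) \<noteq> W!(b+1+t) \<and> (\<forall>t'<t. W!(a+1+t') = W!(b+1+t'))"
proof -
  let ?P = "\<lambda>t. W!(a+1+t) \<noteq> W!(b+1+t)"
  have "?P (g - b - 1)" using assms by (metis add_diff_inverse_nat Nat.add_diff_assoc2 Suc_leI add.commute
      add_less_cancel_left diff_diff_left less_diff_conv not_less_eq plus_1_eq_Suc)
  then obtain t where t: "?P t" "\<forall>t'<t. \<not> ?P t'" "t \<le> g - b - 1"
    using ex_least_nat_le[of ?P "g - b - 1"] by (metis not_less_zero)
  thus ?thesis using assms(2) by (intro exI[of _ t]) auto
qed



lemma DW_split: assumes "1 \<le> i" "i < n" "n \<le> l"
  shows "\<exists>pre \<mu> post. DW l L i = pre @ Some \<mu> # post \<and> 1 \<le> \<mu> \<and> \<mu> \<le> n \<and> \<mu> \<noteq> i \<and> \<mu> \<noteq> 1 \<and>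
     (\<forall>x\<in>set pre. x = None \<or> x = Some 1 \<or> x = Some i) \<and> Some i \<notin> set (Some \<mu> # post)"
proof (cases "i = 1")
  case True
  define S where "S = (\<Sum>m\<in>{1..l}. L m)"
  define BL :: "nat option list" where "BL = concat (map (\<lambda>a. replicate a None @ [Some 1, Some 1]) [1..<2 * (1 + S) + 1])"
  have u: "[2..<l + 1] = 2 # [3..<l + 1]" using assms True by (simp add: upt_conv_Cons)
  have W: "DW l L i = (BL @ [None]) @ Some 2 # (Some 2 # concat (map (\<lambda>m. [Some m, Some m]) [3..<l + 1]) @ [None])"
    using assms True unfolding DW_def Let_def S_def[symmetric] BL_def[symmetric] u by simp
  have sBL: "\<forall>x\<in>set BL. x = None \<or> x = Some 1" unfolding BL_def by auto
  show ?thesis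
    by (rule exI[of _ "BL @ [None]"], rule exI[of _ 2], rule exI[of _ "Some 2 # concat (map (\<lambda>m. [Some m, Some m]) [3..<l + 1]) @ [None]"])
       (use W sBL assms True in auto)
next
  case False
  have u: "[i..<l + 1] = i # Suc i # [i+2..<l + 1]" using assms by (simp add: upt_conv_Cons)
  have W: "DW l L i = [None, Some i, Some i] @ Some (Suc i) # (Some (Suc i) # concat (map (\<lambda>m. [Some m, Some m]) [i+2..<l + 1]) @ [None])"
    using assms False unfolding DW_def Let_def u by simp
  show ?thesis
    by (rule exI[of _ "[None, Some i, Some i]"], rule exI[of _ "Suc i"], rule exI[of _ "Some (Suc i) # concat (map (\<lambda>m. [Some m, Some m]) [i+2..<l + 1]) @ [None]"])
       (use W assms False in auto)
qed

lemma wt_take_Suc: "a < length W \<Longrightarrow> wt l (take (Suc a) W) = wt l (take a W) + length (ex l (W!a))"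
  by (simp add: take_Suc_conv_app_nth)

lemma wt_take_mono: "a \<le> b \<Longrightarrow> wt l (take a W) \<le> wt l (take b W)"
proof -
  assume "a \<le> b"
  hence "take b W = take a W @ take (b - a) (drop a W)" by (metis le_add_diff_inverse take_add)
  thus ?thesis by (metis le_add1 wt_append)
qed

lemma wt_split: "wt l W = wt l (take c W) + wt l (drop c W)"
  by (metis append_take_drop_id wt_append)

lemma wt_mem: "x \<in> set w \<Longrightarrow> length (ex l x) \<le> wt l w"
  by (induction w) auto

lemma pos: assumes "q < wt l W" "pw l W ! q = (i,p)" "1 \<le> p"
  shows "\<exists>a<length W. W!a = Some i \<and> q = wt l (take a W) + p \<and> p < l i"
proof -
  obtain c where c: "c < length W" "wt l (take c W) \<le> q"
    "q < wt l (take c W) + length (ex l (W!c))" "pw l W ! q = ex l (W!c) ! (q - wt l (take c W))"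
    using decomp[OF assms(1)] by blast
  define ofs where "ofs = q - wt l (take c W)"
  show ?thesis
  proof (cases "W ! c")
    case None
    hence "ofs = 0" using c(2,3) by (simp add: ofs_def)
    thus ?thesis using c(4) None assms(2,3) by (simp add: ofs_def v0_eq)
  next
    case (Some m)
    have ol: "ofs < max 1 (l m)" using c(2,3) Some by (simp add: ofs_def)
    show ?thesis
    proof (cases "ofs < l m")
      case True
      have "cv m ofs = (i,p)" using c(4) Some ex_nth[of ofs l m, OF True] assms(2) by (simp add: ofs_def)
      hence "ofs \<noteq> 0" "m = i" "ofs = p" using assms(3) by (auto simp: cv_def v0_eq split: if_splits)
      thus ?thesis using c(1,2) Some True by (intro exI[of _ c]) (auto simp: ofs_def)
    next
      case False
      hence "ofs = 0" using ol by simp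
      hence "pw l W ! q = v0" using c(4) Some by (simp add: ofs_def)
      thus ?thesis using assms(2,3) by (simp add: v0_eq)
    qed
  qed
qed

lemma lift: assumes "z \<in> X" "z l = (i,p)" "1 \<le> p" "1 \<le> i" "enat i \<le> deg z"
  shows "\<exists>q. z (Suc l) = (i,q) \<and> 1 \<le> q \<and> q < clen (Suc l) i \<and> Ppath l (clen l) i ! q = (i,p)"
proof -
  have nz: "z (Suc l) \<noteq> v0"
  proof
    assume "z (Suc l) = v0" hence "z l = v0" using X_phi[OF assms(1), of l] by simp
    thus False using assms(2,3) by (simp add: v0_eq)
  qed
  obtain m q where h: "z (Suc l) = (m,q)" "1 \<le> m" "m \<le> Suc l" "1 \<le> q" "q < clen (Suc l) m"
    using V_nz[OF X_V[OF assms(1)] nz] by blast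
  have e: "Ppath l (clen l) m ! q = (i,p)" using X_phi[OF assms(1), of l] h assms(2) by (simp add: phi_def v0_eq)
  have "q < length (Ppath l (clen l) m)" using Plen[OF h(2,3)] h(5) by simp
  hence "(i,p) \<in> set (Ppath l (clen l) m)" using e by (metis nth_mem)
  hence "(i,p) \<in> insert v0 {(m',j). Some m' \<in> set (DW l (clen l) m) \<and> 1 \<le> j \<and> j < clen l m'}"
    using set_pw unfolding Ppath_pw by blast
  hence "Some i \<in> set (DW l (clen l) m)" using assms(3) by (auto simp: v0_eq)
  from DW_set[OF h(2) this] have a: "2 \<le> m \<longrightarrow> m \<le> i" by auto
  have "deg z \<le> enat m" using deg_le[of z "Suc l"] h by (simp add: vdeg_pair)
  hence "enat i \<le> enat m" using assms(5) by (rule order_trans[rotated])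
  hence "i \<le> m" by simp
  hence "m = i" using a h(2) assms(4) by linarith
  thus ?thesis using h e by auto
qed



lemma valid_DW: "1 \<le> i \<Longrightarrow> valid l (DW l L i)"
  unfolding valid_def using DW_set by blast

lemma valid_drop: "valid l W \<Longrightarrow> valid l (drop c W)"
  unfolding valid_def by (meson in_set_dropD)

lemma no_shift: assumes "1 \<le> i" "i < n" "n \<le> l" "z1 \<in> X" "z2 \<in> X"
  "z1 (Suc l) = (i,q)" "z2 (Suc l) = (i,q')" "q < q'" "q' < clen (Suc l) i"
  "Ppath l (clen l) i ! q = (i,p)" "Ppath l (clen l) i ! q' = (i,p)" "1 \<le> p"
  "\<forall>j. (T ^^ j) z1 n = (T ^^ j) z2 n"
shows False
proof -
  let ?L = "clen l"
  define W where "W = DW l ?L i"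
  define D where "D = l - n"
  have lD: "l = n + D" using assms(3) by (simp add: D_def)
  have n1: "1 \<le> n" using assms by simp
  have il: "i \<le> l" using assms by simp
  have wW: "wt ?L W = clen (Suc l) i" using clen_Suc[of i l] assms(1) il by (simp add: W_def)
  have P: "Ppath l ?L i = pw ?L W" by (simp add: W_def Ppath_pw)
  have ci: "l + 2 \<le> clen l i" using clen_bound[of l i] assms il by simp
  have lexi: "length (ex ?L (Some i)) = clen l i" using ci by simp
  obtain a where a: "a < length W" "W!a = Some i" "q = wt ?L (take a W) + p" "p < clen l i"
    using pos[of q ?L W i p] assms(8-12) wW P by auto
  obtain b where b: "b < length W" "W!b = Some i" "q' = wt ?L (take b W) + p"
    using pos[of q' ?L W i p] assms(8-12) wW P by auto
  have ab: "a < b"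
  proof (rule ccontr)
    assume "\<not> a < b"
    hence "b < a \<or> a = b" by auto
    thus False
    proof
      assume "b < a"
      hence "wt ?L (take (Suc b) W) \<le> wt ?L (take a W)" by (intro wt_take_mono) simp
      moreover have "wt ?L (take (Suc b) W) = wt ?L (take b W) + clen l i" using wt_take_Suc[OF b(1)] b(2) lexi by simp
      ultimately show False using a b assms(8) by simp
    qed (use a b assms(8) in simp)
  qed
  obtain pre \<mu> post where sp: "W = pre @ Some \<mu> # post" "1 \<le> \<mu>" "\<mu> \<le> n" "\<mu> \<noteq> i" "\<mu> \<noteq> 1"
    "\<forall>x\<in>set pre. x = None \<or> x = Some 1 \<or> x = Some i" "Some i \<notin> set (Some \<mu> # post)"
    using DW_split[OF assms(1-3), of ?L] unfolding W_def by blast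
  define g where "g = length pre"
  have gl: "g < length W" "W!g = Some \<mu>" using sp(1) by (auto simp: g_def)
  have pre_t: "t < g \<Longrightarrow> W!t = None \<or> W!t = Some 1 \<or> W!t = Some i" for t
    using sp(1,6) by (auto simp: g_def nth_append)
  have ng: "\<forall>t<g. W!t \<noteq> W!g" using pre_t gl sp(4,5) by force
  have bg: "b < g"
  proof (rule ccontr)
    assume "\<not> b < g"
    hence e: "W!b = (Some \<mu> # post) ! (b - g)" using sp(1) by (simp add: g_def nth_append)
    have "b - g < length (Some \<mu> # post)" using b(1) sp(1) \<open>\<not> b < g\<close> by (simp add: g_def)
    hence "W!b \<in> set (Some \<mu> # post)" unfolding e by (rule nth_mem)
    thus False using b(2) sp(7) by simp
  qed
  obtain t where t: "b + 1 + t \<le> g" "W!(a+1+t) \<noteq> W!(b+1+t)" "\<forall>t'<t. W!(a+1+t') = W!(b+1+t')"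
    using first_diff[OF ab bg gl(1) ng] by blast
  define sw where "sw = take t (drop (b+1) W)"
  define \<alpha> where "\<alpha> = W!(a+1+t)"
  define \<beta> where "\<beta> = W!(b+1+t)"
  have sw2: "take t (drop (a+1) W) = sw" unfolding sw_def
    by (rule nth_equalityI) (use t ab gl bg in auto)
  have dd: "drop (c+1) W = take t (drop (c+1) W) @ W!(c+1+t) # drop (c+2+t) W" if "c+1+t < length W" for c
  proof -
    have "drop (c+1) W = take t (drop (c+1) W) @ drop t (drop (c+1) W)" by (rule append_take_drop_id[symmetric])
    also have "drop t (drop (c+1) W) = drop (c+1+t) W" by (simp add: add.commute)
    also have "\<dots> = W!(c+1+t) # drop (Suc (c+1+t)) W" using that by (rule Cons_nth_drop_Suc[symmetric])
    finally show ?thesis by simp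
  qed
  have Da: "drop (a+1) W = sw @ \<alpha> # drop (a+2+t) W" using dd[of a] sw2 t ab gl by (simp add: \<alpha>_def)
  have Db: "drop (b+1) W = sw @ \<beta> # drop (b+2+t) W" using dd[of b] t gl by (simp add: \<beta>_def sw_def)
  have vW: "valid (n + D) W" using valid_DW[OF assms(1)] lD by (simp add: W_def)
  have mu_in: "Some \<mu> \<in> set (\<beta> # drop (b+2+t) W)"
  proof -
    have i1: "drop (b+1+t) W ! (g - (b+1+t)) = W!g" using t gl by simp
    have i2: "g - (b+1+t) < length (drop (b+1+t) W)" using t gl by simp
    have "W!g \<in> set (drop (b+1+t) W)" using nth_mem[OF i2] i1 by simp
    moreover have "drop (b+1+t) W = \<beta> # drop (b+2+t) W" unfolding \<beta>_def
      using t gl Cons_nth_drop_Suc[of "b+1+t" W] by simp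
    ultimately show ?thesis using gl by simp
  qed
  have cmu: "l + 2 \<le> clen l \<mu>" using clen_bound[of l \<mu>] sp assms by simp
  have "length (ex ?L (Some \<mu>)) \<le> wt ?L (\<beta> # drop (b+2+t) W)" by (rule wt_mem[OF mu_in])
  hence wb: "wt ?L sw + D + 2 \<le> wt ?L (drop (b+1) W)" using Db cmu lD by simp
  define J where "J = clen l i - p + wt ?L sw + D + 1"
  have qa: "q + J = wt ?L (take (Suc a) W) + wt ?L sw + D + 1"
    using a wt_take_Suc[OF a(1)] lexi by (simp add: J_def)
  have qb: "q' + J = wt ?L (take (Suc b) W) + wt ?L sw + D + 1"
    using a b wt_take_Suc[OF b(1)] lexi by (simp add: J_def)
  have qbW: "q' + J < wt ?L W" using qb wb wt_split[of ?L W "Suc b"] by simp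
  have eval: "(T ^^ J) z n = view n \<gamma>"
    if z: "z \<in> X" "z (Suc l) = (i, wt ?L (take c W) + p)" "c < length W" "W!c = Some i"
       "drop (c+1) W = sw @ \<gamma> # r" "wt ?L (take c W) + p + J < wt ?L W" for z c \<gamma> r
  proof -
    have zJ: "(T ^^ J) z (Suc l) = (i, wt ?L (take c W) + p + J)"
      using T_iter[OF z(1,2)] z(6) wW assms(12) by simp
    have tS: "wt ?L (take c W) + p + J = wt ?L (take (Suc c) W) + (wt ?L sw + D + 1)"
      using wt_take_Suc[OF z(3)] z(4) lexi a(4) by (simp add: J_def)
    have "(T ^^ J) z l = phi l ((T ^^ J) z (Suc l))" using X_phi[OF Tn_X[OF z(1)]] by simp
    also have "\<dots> = Ppath l ?L i ! (wt ?L (take c W) + p + J)" using zJ assms(12) by (simp add: phi_def v0_eq)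
    also have "\<dots> = pw ?L (drop (Suc c) W) ! (wt ?L sw + D + 1)" unfolding P tS
      by (rule pw_shift) (use z(3) in simp)
    finally have zl: "(T ^^ J) z l = pw ?L (sw @ \<gamma> # r) ! (wt ?L sw + D + 1)" using z(5) by simp
    have "(T ^^ J) z n = pd D n ((T ^^ J) z (n + D))" using pd_X[OF Tn_X[OF z(1)]] by simp
    also have "\<dots> = pd D n (pw (clen (n + D)) (sw @ \<gamma> # r) ! (wt (clen (n + D)) sw + D + 1))"
      using zl lD by simp
    also have "\<dots> = view n \<gamma>"
    proof (rule view_lemma[OF n1])
      show "valid (n + D) (sw @ \<gamma> # r)" using valid_drop[OF vW, of "c+1"] z(5) by simp
      have "wt ?L (take (Suc c) W) + (wt ?L sw + D + 1) < wt ?L (take (Suc c) W) + wt ?L (drop (Suc c) W)"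
        using z(6) tS wt_split[of ?L W "Suc c"] by simp
      thus "wt (clen (n + D)) sw + D + 1 < wt (clen (n + D)) (sw @ \<gamma> # r)" using z(5) lD by simp
    qed
    finally show ?thesis .
  qed
  have e1: "(T ^^ J) z1 n = view n \<alpha>"
    by (rule eval[OF assms(4) _ a(1,2) Da]) (use assms(6) a(3) qb qbW assms(8) in simp_all)
  have e2: "(T ^^ J) z2 n = view n \<beta>"
    by (rule eval[OF assms(5) _ b(1,2) Db]) (use assms(7) b(3) qbW in simp_all)
  have small: "W!t' = None \<or> (\<exists>m. W!t' = Some m \<and> 1 \<le> m \<and> m \<le> n)" if "t' \<le> g" for t'
  proof (cases "t' = g")
    case True thus ?thesis using gl sp by simp
  next
    case False thus ?thesis using pre_t[of t'] that assms by auto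
  qed
  have "view n \<alpha> \<noteq> view n \<beta>"
    by (rule view_inj) (use t small[of "a+1+t"] small[of "b+1+t"] ab in \<open>simp_all add: \<alpha>_def \<beta>_def\<close>)
  thus False using e1 e2 assms(13) by simp
qed



lemma step: assumes "1 \<le> i" "i < n" "n \<le> l" "z1 \<in> X" "z2 \<in> X"
  "enat i \<le> deg z1" "enat i \<le> deg z2" "z1 l = (i,p)" "z2 l = (i,p)" "1 \<le> p"
  "\<forall>j. (T ^^ j) z1 n = (T ^^ j) z2 n"
  shows "\<exists>q. z1 (Suc l) = (i,q) \<and> z2 (Suc l) = (i,q) \<and> p + 1 \<le> q"
proof -
  obtain q1 where q1: "z1 (Suc l) = (i,q1)" "1 \<le> q1" "q1 < clen (Suc l) i" "Ppath l (clen l) i ! q1 = (i,p)"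
    using lift[OF assms(4,8,10,1,6)] by blast
  obtain q2 where q2: "z2 (Suc l) = (i,q2)" "1 \<le> q2" "q2 < clen (Suc l) i" "Ppath l (clen l) i ! q2 = (i,p)"
    using lift[OF assms(5,9,10,1,7)] by blast
  have sym: "\<forall>j. (T ^^ j) z2 n = (T ^^ j) z1 n" using assms(11) by simp
  have "\<not> q1 < q2" using no_shift[OF assms(1-5) q1(1) q2(1) _ q2(3) q1(4) q2(4) assms(10,11)] by blast
  moreover have "\<not> q2 < q1" using no_shift[OF assms(1-3,5,4) q2(1) q1(1) _ q1(3) q2(4) q1(4) assms(10) sym] by blast
  ultimately have eq: "q1 = q2" by simp
  have il: "i \<le> l" using assms by simp
  have wW: "wt (clen l) (DW l (clen l) i) = clen (Suc l) i" using clen_Suc[of i l] assms(1) il by simp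
  obtain a where a: "a < length (DW l (clen l) i)" "DW l (clen l) i ! a = Some i"
     "q1 = wt (clen l) (take a (DW l (clen l) i)) + p"
    using pos[of q1 "clen l" "DW l (clen l) i" i p] q1 wW assms(10) by (auto simp: Ppath_pw)
  obtain r where r: "DW l (clen l) i = None # Some i # Some i # r" using DW_start[OF assms(1) il] by metis
  have "a \<noteq> 0"
  proof
    assume "a = 0" thus False using a(2) r by simp
  qed
  hence "wt (clen l) (take 1 (DW l (clen l) i)) \<le> wt (clen l) (take a (DW l (clen l) i))"
    by (intro wt_take_mono) simp
  hence "1 \<le> wt (clen l) (take a (DW l (clen l) i))" using r by simp
  thus ?thesis using q1 q2 eq a(3) by auto
qed

lemma back_iter: assumes "z \<in> X" "(T ^^ s) z N = (i,p)" "s < p"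
  shows "d \<le> s \<Longrightarrow> (T ^^ (s - d)) z N = (i, p - d)"
proof (induction d)
  case 0 thus ?case using assms by simp
next
  case (Suc d)
  have h: "(T ^^ (s - d)) z N = (i, p - d)" using Suc by simp
  have e: "s - d = Suc (s - Suc d)" using Suc.prems by simp
  have "T ((T ^^ (s - Suc d)) z) N = (i, p - d)" using h unfolding e by simp
  from T_back[OF Tn_X[OF assms(1)] this] have "(T ^^ (s - Suc d)) z N = (i, p - d - 1)"
    using Suc.prems assms(3) by simp
  thus ?case by simp
qed

theorem lemma3p12:
  fixes x y :: "nat \<Rightarrow> vert" and i n k :: nat
  assumes "x \<in> X" and "y \<in> X"
    and "i \<ge> 1" and "deg x = enat i" and "deg y = enat i"
    and "n > i + 2" and "k \<ge> 1"
    and "\<forall>j\<ge>k. (T ^^ j) x n = (T ^^ j) y n"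
    and "\<forall>t\<le>clen n i. (T ^^ (k + t)) x n = cyc n i ! t"
  shows "\<forall>j. (T ^^ j) x n = (T ^^ j) y n"
proof
  fix j
  define s where "s = Suc k"
  define z1 where "z1 = (T ^^ s) x"
  define z2 where "z2 = (T ^^ s) y"
  have X1: "z1 \<in> X" "z2 \<in> X" using Tn_X assms(1,2) by (auto simp: z1_def z2_def)
  have d1: "enat i \<le> deg z1" using deg_Tn[OF assms(1), of s] assms(4) by (simp add: z1_def)
  have d2: "enat i \<le> deg z2" using deg_Tn[OF assms(2), of s] assms(5) by (simp add: z2_def)
  have i1: "1 \<le> i" "i < n" using assms by auto
  have cn: "2 \<le> clen n i" using clen_ge2[of i n] i1 by simp
  have z1n: "z1 n = (i,1)"
    using assms(9)[rule_format, of 1] cn cyc_val[of i n 1] i1 by (simp add: z1_def s_def)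
  have z2n: "z2 n = (i,1)" using z1n assms(8)[rule_format, of s] by (simp add: z1_def z2_def s_def)
  have agree: "\<forall>j. (T ^^ j) z1 n = (T ^^ j) z2 n"
  proof
    fix j
    have a1: "(T ^^ j) z1 = (T ^^ (j + s)) x" by (simp add: z1_def funpow_add)
    have a2: "(T ^^ j) z2 = (T ^^ (j + s)) y" by (simp add: z2_def funpow_add)
    have "k \<le> j + s" by (simp add: s_def)
    thus "(T ^^ j) z1 n = (T ^^ j) z2 n" using assms(8) a1 a2 by simp
  qed
  have lev: "\<exists>p. z1 (n + d) = (i,p) \<and> z2 (n + d) = (i,p) \<and> d + 1 \<le> p" for d
  proof (induction d)
    case 0 thus ?case using z1n z2n by simp
  next
    case (Suc d)
    then obtain p where p: "z1 (n + d) = (i,p)" "z2 (n + d) = (i,p)" "d + 1 \<le> p" by blast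
    from step[OF i1 _ X1 d1 d2 p(1,2) _ agree] p(3)
    obtain q where "z1 (Suc (n + d)) = (i,q)" "z2 (Suc (n + d)) = (i,q)" "p + 1 \<le> q" by auto
    thus ?case using p(3) by (intro exI[of _ q]) auto
  qed
  obtain p where p: "z1 (n + s) = (i,p)" "z2 (n + s) = (i,p)" "s + 1 \<le> p" using lev[of s] by blast
  show "(T ^^ j) x n = (T ^^ j) y n"
  proof (cases "j \<le> s")
    case False thus ?thesis using assms(8) by (simp add: s_def)
  next
    case True
    have bx: "(T ^^ (s - (s - j))) x (n + s) = (i, p - (s - j))"
      using back_iter[OF assms(1), of s "n + s" i p "s - j"] p(1) p(3) by (simp add: z1_def)
    have by': "(T ^^ (s - (s - j))) y (n + s) = (i, p - (s - j))"
      using back_iter[OF assms(2), of s "n + s" i p "s - j"] p(2) p(3) by (simp add: z2_def)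
    have "(T ^^ j) x (n + s) = (T ^^ j) y (n + s)" using bx by' True by simp
    thus ?thesis using pd_X[OF Tn_X[OF assms(1)], of s n j] pd_X[OF Tn_X[OF assms(2)], of s n j] by metis
  qed
qed


end
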